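(* Let $q$ be odd and $u\in\mathbf{SL}_n(q)$ unipotent. Assume either (a) $n=4$ and $u$ has type $(2,2)$, or (b) $n=3$ and $u$ has type $(2,1)$. Then the conjugacy class $\mathcal{O}_u$ in $\mathbf{SL}_n(q)$ is of type D.
   Context: Unipotent type = sizes of Jordan blocks. Conjugacy classes are racks with $x\triangleright y=xyx^{-1}$. A subrack $Y$ is decomposable if $Y=R\sqcup S$ with nonempty subracks $R,S$, $Y\triangleright R=R$, $Y\triangleright S=S$. Type D: a decomposable subrack $R\sqcup S$ with $r\in R,s\in S$ and $r\triangleright(s\triangleright(r\triangleright s))\neq s$. *)

theory Defs
  imports "Jordan_Normal_Form.Jordan_Normal_Form"
begin

definition SL_mat :: "nat \<Rightarrow> 'a :: field mat set" where
  "SL_mat n = {A \<in> carrier_mat n n. det A = 1}"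

definition mat_inv :: "'a :: field mat \<Rightarrow> 'a mat" where
  "mat_inv A = (SOME B. B \<in> carrier_mat (dim_row A) (dim_row A)
                   \<and> inverts_mat A B \<and> inverts_mat B A)"

definition rack_op :: "'a :: field mat \<Rightarrow> 'a mat \<Rightarrow> 'a mat" where
  "rack_op x y = x * y * mat_inv x"

definition conj_class_SL :: "nat \<Rightarrow> 'a :: field mat \<Rightarrow> 'a mat set" where
  "conj_class_SL n u = {rack_op g u | g. g \<in> SL_mat n}"

definition subrack :: "'a :: field mat set \<Rightarrow> 'a mat set \<Rightarrow> bool" where
  "subrack Y X \<longleftrightarrow> Y \<subseteq> X \<and> (\<forall>x\<in>Y. \<forall>y\<in>Y. rack_op x y \<in> Y)"

definition rack_act_set :: "'a :: field mat set \<Rightarrow> 'a mat set \<Rightarrow> 'a mat set" where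
  "rack_act_set Y R = {rack_op y r | y r. y \<in> Y \<and> r \<in> R}"

definition decomposition :: "'a :: field mat set \<Rightarrow> 'a mat set \<Rightarrow> 'a mat set \<Rightarrow> bool" where
  "decomposition Y R S \<longleftrightarrow> Y = R \<union> S \<and> R \<inter> S = {} \<and> R \<noteq> {} \<and> S \<noteq> {}
     \<and> subrack R Y \<and> subrack S Y
     \<and> rack_act_set Y R = R \<and> rack_act_set Y S = S"

definition rack_type_D :: "'a :: field mat set \<Rightarrow> bool" where
  "rack_type_D X \<longleftrightarrow> (\<exists>Y R S. subrack Y X \<and> decomposition Y R S \<and>
     (\<exists>r\<in>R. \<exists>s\<in>S. rack_op r (rack_op s (rack_op r s)) \<noteq> s))"

end

theory Submission
  imports Defs
begin


definition UT :: "nat \<Rightarrow> 'a::field mat set" where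
  "UT n = {A \<in> carrier_mat n n. \<forall>i<n. A $$ (i,i) = 1 \<and> (\<forall>j<i. A $$ (i,j) = 0)}"

definition sd :: "nat \<Rightarrow> 'a::field mat \<Rightarrow> nat \<Rightarrow> 'a" where
  "sd n A i = (if Suc i < n then A $$ (i, Suc i) else 0)"

definition Gp :: "nat \<Rightarrow> 'a::field mat set" where
  "Gp n = {A \<in> UT n. mat_inv A \<in> UT n}"

lemma sq_mult: "A \<in> carrier_mat n n \<Longrightarrow> B \<in> carrier_mat n n \<Longrightarrow> A * B \<in> carrier_mat n n"
  by simp
lemma sq_assoc: "A \<in> carrier_mat n n \<Longrightarrow> B \<in> carrier_mat n n \<Longrightarrow> C \<in> carrier_mat n n \<Longrightarrow> A * B * C = A * (B * C)"
  by simp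
lemma sq_r1: "(A :: 'a :: semiring_1 mat) \<in> carrier_mat n n \<Longrightarrow> A * 1\<^sub>m n = A" by simp
lemma sq_l1: "(A :: 'a :: semiring_1 mat) \<in> carrier_mat n n \<Longrightarrow> 1\<^sub>m n * A = A" by simp

lemma sq_cancel: "x \<in> carrier_mat n n \<Longrightarrow> y \<in> carrier_mat n n \<Longrightarrow> Z \<in> carrier_mat n n \<Longrightarrow> x * y = 1\<^sub>m n \<Longrightarrow> x * (y * Z) = (Z :: 'a :: semiring_1 mat)"
  by (metis assoc_mult_mat left_mult_one_mat)

lemmas sqs = sq_assoc[where n=n] sq_mult[where n=n] sq_r1[where n=n] sq_l1[where n=n] sq_cancel[where n=n] for n

lemma mat_inv_prop:
  assumes A: "A \<in> carrier_mat n n" and ex: "B \<in> carrier_mat n n" "A * B = 1\<^sub>m n" "B * A = 1\<^sub>m n"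
  shows "mat_inv A \<in> carrier_mat n n \<and> A * mat_inv A = 1\<^sub>m n \<and> mat_inv A * A = 1\<^sub>m n"
proof -
  have dr: "dim_row A = n" using A by auto
  have e: "\<exists>B. B \<in> carrier_mat (dim_row A) (dim_row A) \<and> inverts_mat A B \<and> inverts_mat B A"
    using ex dr by (auto simp: inverts_mat_def)
  have "mat_inv A \<in> carrier_mat (dim_row A) (dim_row A) \<and> inverts_mat A (mat_inv A) \<and> inverts_mat (mat_inv A) A"
    unfolding mat_inv_def by (rule someI_ex[OF e])
  thus ?thesis by (auto simp: inverts_mat_def dr)
qed

lemma mat_inv_eq:
  assumes A: "A \<in> carrier_mat n n" and B: "B \<in> carrier_mat n n" and AB: "A * B = 1\<^sub>m n" "B * A = 1\<^sub>m n"
  shows "mat_inv A = B"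
proof -
  note p = mat_inv_prop[OF A B AB]
  have "mat_inv A = mat_inv A * (A * B)" using p AB by (simp add: sq_r1[where n=n])
  also have "\<dots> = B" using p A B by (simp del: assoc_mult_mat add: sqs[where n=n])
  finally show ?thesis .
qed

lemma SL_inv:
  assumes "A \<in> SL_mat n"
  shows "mat_inv A \<in> carrier_mat n n \<and> A * mat_inv A = 1\<^sub>m n \<and> mat_inv A * A = 1\<^sub>m n"
proof -
  have Ac: "A \<in> carrier_mat n n" "det A = 1" using assms by (auto simp: SL_mat_def)
  from det_non_zero_imp_unit[OF Ac(1), of "()"] Ac
  have "A \<in> Units (ring_mat TYPE('a) n ())" by simp
  then obtain B where B: "B \<in> carrier_mat n n" "B * A = 1\<^sub>m n" "A * B = 1\<^sub>m n"
    unfolding Units_def ring_mat_def by auto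
  show ?thesis by (rule mat_inv_prop[OF Ac(1) B(1) B(3) B(2)])
qed

lemma SL_mult: "A \<in> SL_mat n \<Longrightarrow> B \<in> SL_mat n \<Longrightarrow> A * B \<in> SL_mat n"
  by (auto simp: SL_mat_def det_mult)

lemma SL_mat_inv: assumes "A \<in> SL_mat n" shows "mat_inv A \<in> SL_mat n"
proof -
  note p = SL_inv[OF assms]
  have Ac: "A \<in> carrier_mat n n" "det A = 1" using assms by (auto simp: SL_mat_def)
  have "det A * det (mat_inv A) = 1" using det_mult[OF Ac(1), of "mat_inv A"] p by simp
  thus ?thesis using p Ac by (simp add: SL_mat_def)
qed

lemma conj3:
  assumes "g \<in> carrier_mat n n" "h \<in> carrier_mat n n" "u \<in> carrier_mat n n" "gi \<in> carrier_mat n n" "hi \<in> carrier_mat n n"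
  shows "g * (h * u * hi) * gi = (g * h) * u * (hi * gi)"
  using assms by (simp del: assoc_mult_mat add: sqs[where n=n])

lemma SL_carrier: "A \<in> SL_mat n \<Longrightarrow> A \<in> carrier_mat n n"
  by (simp add: SL_mat_def)

lemma mat_inv_mult:
  assumes g: "g \<in> SL_mat n" and h: "h \<in> SL_mat n"
  shows "mat_inv (g * h) = mat_inv h * mat_inv g"
proof -
  note pg = SL_inv[OF g] and ph = SL_inv[OF h]
  note gc = SL_carrier[OF g] and hc = SL_carrier[OF h]
  have "(g * h) * (mat_inv h * mat_inv g) = g * (h * mat_inv h) * mat_inv g"
    using pg ph gc hc by (simp del: assoc_mult_mat add: sqs[where n=n])
  hence 1: "(g * h) * (mat_inv h * mat_inv g) = 1\<^sub>m n" using pg ph gc by (simp del: assoc_mult_mat add: sqs[where n=n])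
  have "(mat_inv h * mat_inv g) * (g * h) = mat_inv h * (mat_inv g * g) * h"
    using pg ph gc hc by (simp del: assoc_mult_mat add: sqs[where n=n])
  hence 2: "(mat_inv h * mat_inv g) * (g * h) = 1\<^sub>m n" using pg ph hc by (simp del: assoc_mult_mat add: sqs[where n=n])
  show ?thesis by (rule mat_inv_eq[OF _ _ 1 2], insert pg ph gc hc, auto)
qed

lemma C_closed:
  assumes u: "u \<in> carrier_mat n n" and g: "g \<in> SL_mat n" and c: "c \<in> conj_class_SL n u"
  shows "rack_op g c \<in> conj_class_SL n u"
proof -
  obtain h where h: "h \<in> SL_mat n" "c = h * u * mat_inv h" using c unfolding conj_class_SL_def rack_op_def by auto
  have "rack_op g c = (g * h) * u * mat_inv (g * h)"
    unfolding rack_op_def h(2) mat_inv_mult[OF g h(1)]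
    by (rule conj3, insert u SL_carrier[OF g] SL_carrier[OF h(1)] SL_inv[OF g] SL_inv[OF h(1)], auto)
  thus ?thesis unfolding conj_class_SL_def rack_op_def using SL_mult[OF g h(1)] by blast
qed

lemma C_sub:
  assumes u: "u \<in> SL_mat n" and c: "c \<in> conj_class_SL n u" shows "c \<in> SL_mat n"
proof -
  obtain h where h: "h \<in> SL_mat n" "c = h * u * mat_inv h" using c unfolding conj_class_SL_def rack_op_def by auto
  show ?thesis unfolding h(2) by (intro SL_mult h(1) u SL_mat_inv)
qed

lemma one_SL: "1\<^sub>m n \<in> SL_mat n" by (simp add: SL_mat_def)

lemma mat_inv_one: "mat_inv (1\<^sub>m n :: 'a::field mat) = 1\<^sub>m n"
  by (rule mat_inv_eq[of _ n], auto)

lemma u_in_C: assumes "u \<in> carrier_mat n n" shows "u \<in> conj_class_SL n u"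
proof -
  have "u = rack_op (1\<^sub>m n) u" unfolding rack_op_def mat_inv_one using assms by simp
  thus ?thesis unfolding conj_class_SL_def using one_SL by blast
qed

lemma rack_op_self: assumes "x \<in> SL_mat n" shows "rack_op x x = x"
proof -
  note p = SL_inv[OF assms] and xc = SL_carrier[OF assms]
  have "rack_op x x = x * (x * mat_inv x)" unfolding rack_op_def using p xc by (simp del: assoc_mult_mat add: sqs[where n=n])
  thus ?thesis using p xc by (simp del: assoc_mult_mat add: sqs[where n=n])
qed


lemma mult_entry:
  assumes "A \<in> carrier_mat n n" "B \<in> carrier_mat n n" "i < n" "j < n"
  shows "(A * B) $$ (i,j) = (\<Sum>k\<in>{0..<n}. A $$ (i,k) * B $$ (k,j))"
  using assms by (simp add: scalar_prod_def)

lemma UT_mult: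
  assumes A: "A \<in> UT n" and B: "B \<in> UT n"
  shows "A * B \<in> UT n"
proof -
  have Ac: "A \<in> carrier_mat n n" and Bc: "B \<in> carrier_mat n n" using A B by (auto simp: UT_def)
  have Ad: "\<And>i. i < n \<Longrightarrow> A $$ (i,i) = 1" and Al: "\<And>i j. i < n \<Longrightarrow> j < i \<Longrightarrow> A $$ (i,j) = 0"
    using A by (auto simp: UT_def)
  have Bd: "\<And>i. i < n \<Longrightarrow> B $$ (i,i) = 1" and Bl: "\<And>i j. i < n \<Longrightarrow> j < i \<Longrightarrow> B $$ (i,j) = 0"
    using B by (auto simp: UT_def)
  {
    fix i assume i: "i < n"
    have "(A * B) $$ (i,i) = (\<Sum>k\<in>{0..<n}. A $$ (i,k) * B $$ (k,i))" by (rule mult_entry[OF Ac Bc i i])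
    also have "\<dots> = (\<Sum>k\<in>{i}. A $$ (i,k) * B $$ (k,i))"
    proof (rule sum.mono_neutral_right)
      show "\<forall>k\<in>{0..<n} - {i}. A $$ (i,k) * B $$ (k,i) = 0"
      proof
        fix k assume k: "k \<in> {0..<n} - {i}"
        show "A $$ (i,k) * B $$ (k,i) = 0"
        proof (cases "k < i")
          case True thus ?thesis using Al[OF i True] by simp
        next
          case False hence "i < k" using k by auto
          thus ?thesis using Bl[of k i] k by auto
        qed
      qed
    qed (insert i, auto)
    also have "\<dots> = 1" using Ad[OF i] Bd[OF i] by simp
    finally have "(A * B) $$ (i,i) = 1" .
    moreover
    {
      fix j assume j: "j < i"
      have "(A * B) $$ (i,j) = (\<Sum>k\<in>{0..<n}. A $$ (i,k) * B $$ (k,j))" using j i by (intro mult_entry[OF Ac Bc]) auto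
      also have "\<dots> = 0"
      proof (rule sum.neutral, rule ballI)
        fix k assume k: "k \<in> {0..<n}"
        show "A $$ (i,k) * B $$ (k,j) = 0"
        proof (cases "k < i")
          case True thus ?thesis using Al[OF i True] by simp
        next
          case False hence "j < k" using j by auto
          thus ?thesis using Bl[of k j] k by auto
        qed
      qed
      finally have "(A * B) $$ (i,j) = 0" .
    }
    ultimately have "(A * B) $$ (i,i) = 1 \<and> (\<forall>j<i. (A * B) $$ (i,j) = 0)" by auto
  }
  thus ?thesis using Ac Bc by (auto simp: UT_def)
qed

lemma UT_sd:
  assumes A: "A \<in> UT n" and B: "B \<in> UT n"
  shows "sd n (A * B) i = sd n A i + sd n B i"
proof (cases "Suc i < n")
  case False thus ?thesis by (simp add: sd_def)
next
  case True
  have Ac: "A \<in> carrier_mat n n" and Bc: "B \<in> carrier_mat n n" using A B by (auto simp: UT_def)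
  have Ad: "\<And>i. i < n \<Longrightarrow> A $$ (i,i) = 1" and Al: "\<And>i j. i < n \<Longrightarrow> j < i \<Longrightarrow> A $$ (i,j) = 0"
    using A by (auto simp: UT_def)
  have Bd: "\<And>i. i < n \<Longrightarrow> B $$ (i,i) = 1" and Bl: "\<And>i j. i < n \<Longrightarrow> j < i \<Longrightarrow> B $$ (i,j) = 0"
    using B by (auto simp: UT_def)
  have i: "i < n" using True by simp
  have "(A * B) $$ (i,Suc i) = (\<Sum>k\<in>{0..<n}. A $$ (i,k) * B $$ (k,Suc i))" by (rule mult_entry[OF Ac Bc i True])
  also have "\<dots> = (\<Sum>k\<in>{i, Suc i}. A $$ (i,k) * B $$ (k,Suc i))"
  proof (rule sum.mono_neutral_right)
    show "\<forall>k\<in>{0..<n} - {i, Suc i}. A $$ (i,k) * B $$ (k,Suc i) = 0"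
    proof
      fix k assume k: "k \<in> {0..<n} - {i, Suc i}"
      show "A $$ (i,k) * B $$ (k,Suc i) = 0"
      proof (cases "k < i")
        case True thus ?thesis using Al[OF i True] by simp
      next
        case False hence "Suc i < k" using k by auto
        thus ?thesis using Bl[of k "Suc i"] k by auto
      qed
    qed
  qed (insert True, auto)
  also have "\<dots> = B $$ (i, Suc i) + A $$ (i, Suc i)" using Ad[OF i] Bd[OF True] by simp
  finally show ?thesis using True by (simp add: sd_def)
qed

lemma UT_det: assumes "A \<in> UT n" shows "det A = 1"
proof -
  have Ac: "A \<in> carrier_mat n n" using assms by (auto simp: UT_def)
  have "upper_triangular A" using assms by (auto simp: UT_def upper_triangular_def)
  hence "det A = prod_list (diag_mat A)" by (rule det_upper_triangular[OF _ Ac])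
  also have "\<dots> = (\<Prod>i = 0 ..< n. A $$ (i,i))" using Ac by (simp add: prod_list_diag_prod)
  also have "\<dots> = 1" using assms by (auto simp: UT_def intro!: prod.neutral)
  finally show ?thesis .
qed

lemma UT_SL: "A \<in> UT n \<Longrightarrow> A \<in> SL_mat n"
  using UT_det by (auto simp: UT_def SL_mat_def)

lemma sd_one: "sd n (1\<^sub>m n) i = 0" by (simp add: sd_def)

lemma Gp_SL: "x \<in> Gp n \<Longrightarrow> x \<in> SL_mat n" by (simp add: Gp_def UT_SL)

lemma Gp_closed:
  assumes x: "x \<in> Gp n" and y: "y \<in> Gp n"
  shows "rack_op x y \<in> Gp n \<and> sd n (rack_op x y) = sd n y"
proof -
  have xU: "x \<in> UT n" "mat_inv x \<in> UT n" and yU: "y \<in> UT n" "mat_inv y \<in> UT n" using x y by (auto simp: Gp_def)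
  note px = SL_inv[OF Gp_SL[OF x]] and py = SL_inv[OF Gp_SL[OF y]]
  have xc: "x \<in> carrier_mat n n" and yc: "y \<in> carrier_mat n n" using xU yU by (auto simp: UT_def)
  have zU: "x * y * mat_inv x \<in> UT n" by (intro UT_mult xU yU)
  have "mat_inv (x * y * mat_inv x) = x * mat_inv y * mat_inv x"
    by (rule mat_inv_eq[of _ n], insert px py xc yc, auto simp del: assoc_mult_mat simp add: sqs[where n=n])
  hence ziU: "mat_inv (x * y * mat_inv x) \<in> UT n" by (simp add: UT_mult xU yU)
  have "sd n (rack_op x y) = sd n y"
  proof
    fix i
    have "sd n (x * mat_inv x) i = sd n x i + sd n (mat_inv x) i" by (rule UT_sd[OF xU])
    hence 0: "sd n x i + sd n (mat_inv x) i = 0" using px sd_one by metis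
    have "sd n (rack_op x y) i = sd n x i + sd n y i + sd n (mat_inv x) i"
      unfolding rack_op_def by (simp add: UT_sd UT_mult xU yU)
    thus "sd n (rack_op x y) i = sd n y i" using 0 by (simp add: algebra_simps)
  qed
  thus ?thesis using zU ziU by (simp add: Gp_def rack_op_def)
qed

context
  fixes n :: nat and P Q :: "'a :: field mat"
  assumes Pc: "P \<in> carrier_mat n n" and Qc: "Q \<in> carrier_mat n n"
    and PQ: "P * Q = 1\<^sub>m n" and QP: "Q * P = 1\<^sub>m n"
begin

lemma Phi_SL: assumes "x \<in> SL_mat n" shows "P * x * Q \<in> SL_mat n"
proof -
  have xc: "x \<in> carrier_mat n n" "det x = 1" using assms by (auto simp: SL_mat_def)
  have "det P * det Q = 1" using det_mult[OF Pc Qc] PQ by simp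
  moreover have "det (P * x * Q) = det P * det x * det Q"
    using det_mult[OF Pc xc(1)] det_mult[of "P * x" n Q] Pc xc Qc by simp
  ultimately show ?thesis using xc Pc Qc by (simp add: SL_mat_def algebra_simps)
qed

lemma Phi_inv: assumes "x \<in> SL_mat n" shows "mat_inv (P * x * Q) = P * mat_inv x * Q"
  using SL_inv[OF assms] SL_carrier[OF assms] Pc Qc PQ QP
  by (intro mat_inv_eq[of _ n]) (auto simp del: assoc_mult_mat simp add: sqs[where n=n])

lemma Phi_rack: assumes x: "x \<in> SL_mat n" and y: "y \<in> SL_mat n"
  shows "rack_op (P * x * Q) (P * y * Q) = P * rack_op x y * Q"
  unfolding rack_op_def Phi_inv[OF x]
  using SL_inv[OF x] SL_carrier[OF x] SL_carrier[OF y] Pc Qc PQ QP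
  by (simp del: assoc_mult_mat add: sqs[where n=n])

lemma Phi_inj: assumes "x \<in> carrier_mat n n" "y \<in> carrier_mat n n" "P * x * Q = P * y * Q"
  shows "x = y"
proof -
  have "x = Q * (P * x * Q) * P" using assms(1,2) Pc Qc PQ QP by (simp del: assoc_mult_mat add: sqs[where n=n])
  also have "\<dots> = Q * (P * y * Q) * P" by (simp only: assms(3))
  also have "\<dots> = y" using assms(1,2) Pc Qc PQ QP by (simp del: assoc_mult_mat add: sqs[where n=n])
  finally show ?thesis .
qed

end


lemma criterion:
  fixes u P Q r0 s0 :: "'a::field mat"
  assumes Pc: "P \<in> carrier_mat n n" and Qc: "Q \<in> carrier_mat n n"
    and PQ: "P * Q = 1\<^sub>m n" and QP: "Q * P = 1\<^sub>m n"
    and uSL: "u \<in> SL_mat n" and u: "u = P * r0 * Q"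
    and r0: "r0 \<in> Gp n" and s0: "s0 \<in> Gp n"
    and sC: "P * s0 * Q \<in> conj_class_SL n u"
    and sdne: "sd n r0 \<noteq> sd n s0"
    and D: "rack_op r0 (rack_op s0 (rack_op r0 s0)) \<noteq> s0"
  shows "rack_type_D (conj_class_SL n u)"
proof -
  let ?C = "conj_class_SL n u"
  let ?F = "\<lambda>y. P * y * Q"
  have uc: "u \<in> carrier_mat n n" using uSL by (rule SL_carrier)
  define Y0 where "Y0 a = {y. y \<in> Gp n \<and> P * y * Q \<in> ?C \<and> sd n y = a}" for a
  define R where "R = ?F ` Y0 (sd n r0)"
  define S where "S = ?F ` Y0 (sd n s0)"
  define Y where "Y = R \<union> S"
  have Gc: "x \<in> carrier_mat n n" if "x \<in> Gp n" for x using SL_carrier[OF Gp_SL[OF that]] .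
  have K: "rack_op (?F x0) (?F y0) \<in> ?F ` Y0 a" if x0: "x0 \<in> Y0 b" and y0: "y0 \<in> Y0 a" for x0 y0 a b
  proof -
    have xg: "x0 \<in> Gp n" "?F x0 \<in> ?C" and yg: "y0 \<in> Gp n" "?F y0 \<in> ?C" "sd n y0 = a"
      using x0 y0 unfolding Y0_def by auto
    note G = Gp_closed[OF xg(1) yg(1)]
    have e: "rack_op (?F x0) (?F y0) = ?F (rack_op x0 y0)"
      by (rule Phi_rack[OF Pc Qc PQ QP Gp_SL[OF xg(1)] Gp_SL[OF yg(1)]])
    have "rack_op (?F x0) (?F y0) \<in> ?C" by (rule C_closed[OF uc C_sub[OF uSL xg(2)] yg(2)])
    hence "rack_op x0 y0 \<in> Y0 a" using G e yg(3) unfolding Y0_def by auto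
    thus ?thesis unfolding e by blast
  qed
  have Y0C: "?F y \<in> ?C" if "y \<in> Y0 a" for y a using that unfolding Y0_def by auto
  have YC: "Y \<subseteq> ?C" unfolding Y_def R_def S_def using Y0C by blast
  have closedY: "\<forall>x\<in>Y. \<forall>y\<in>Y. rack_op x y \<in> Y"
  proof (intro ballI)
    fix x y assume x: "x \<in> Y" and y: "y \<in> Y"
    from x obtain x0 b where x0: "x0 \<in> Y0 b" "x = ?F x0" unfolding Y_def R_def S_def by blast
    from y obtain y0 a where y0: "y0 \<in> Y0 a" "y = ?F y0" "?F ` Y0 a \<subseteq> Y" unfolding Y_def R_def S_def by blast
    show "rack_op x y \<in> Y" using K[OF x0(1) y0(1)] x0(2) y0(2,3) by blast
  qed
  have closedA: "rack_act_set Y (?F ` Y0 a) = ?F ` Y0 a" if sub: "?F ` Y0 a \<subseteq> Y" for a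
  proof
    show "rack_act_set Y (?F ` Y0 a) \<subseteq> ?F ` Y0 a"
    proof
      fix z assume "z \<in> rack_act_set Y (?F ` Y0 a)"
      then obtain x y0 where x: "x \<in> Y" and y0: "y0 \<in> Y0 a" and z: "z = rack_op x (?F y0)"
        unfolding rack_act_set_def by blast
      from x obtain x0 b where x0: "x0 \<in> Y0 b" "x = ?F x0" unfolding Y_def R_def S_def by blast
      show "z \<in> ?F ` Y0 a" using K[OF x0(1) y0] x0(2) z by simp
    qed
  next
    show "?F ` Y0 a \<subseteq> rack_act_set Y (?F ` Y0 a)"
    proof
      fix r assume r: "r \<in> ?F ` Y0 a"
      have "r \<in> SL_mat n" using r Y0C C_sub[OF uSL] by blast
      hence "r = rack_op r r" using rack_op_self by metis
      thus "r \<in> rack_act_set Y (?F ` Y0 a)" using r sub unfolding rack_act_set_def by blast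
    qed
  qed
  have subA: "subrack (?F ` Y0 a) Y" if sub: "?F ` Y0 a \<subseteq> Y" for a
    unfolding subrack_def
  proof (intro conjI sub ballI)
    fix x y assume x: "x \<in> ?F ` Y0 a" and y: "y \<in> ?F ` Y0 a"
    from x obtain x0 where x0: "x0 \<in> Y0 a" "x = ?F x0" by blast
    from y obtain y0 where y0: "y0 \<in> Y0 a" "y = ?F y0" by blast
    show "rack_op x y \<in> ?F ` Y0 a" using K[OF x0(1) y0(1)] x0(2) y0(2) by simp
  qed
  have r0Y: "r0 \<in> Y0 (sd n r0)" using r0 u_in_C[OF uc] u unfolding Y0_def by auto
  have s0Y: "s0 \<in> Y0 (sd n s0)" using s0 sC unfolding Y0_def by auto
  have disj: "R \<inter> S = {}"
  proof (rule ccontr)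
    assume "R \<inter> S \<noteq> {}"
    then obtain y1 y2 where y1: "y1 \<in> Y0 (sd n r0)" and y2: "y2 \<in> Y0 (sd n s0)" and e: "?F y1 = ?F y2"
      unfolding R_def S_def by blast
    have "y1 = y2" by (rule Phi_inj[OF Pc Qc PQ QP _ _ e], insert y1 y2 Gc, auto simp: Y0_def)
    thus False using y1 y2 sdne unfolding Y0_def by auto
  qed
  have RY: "?F ` Y0 (sd n r0) \<subseteq> Y" unfolding Y_def R_def by blast
  have SY: "?F ` Y0 (sd n s0) \<subseteq> Y" unfolding Y_def S_def by blast
  have dec: "decomposition Y R S"
    unfolding decomposition_def
  proof (intro conjI)
    show "Y = R \<union> S" by (simp add: Y_def)
    show "R \<inter> S = {}" by (rule disj)
    show "R \<noteq> {}" using r0Y unfolding R_def by blast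
    show "S \<noteq> {}" using s0Y unfolding S_def by blast
    show "subrack R Y" unfolding R_def by (rule subA[OF RY])
    show "subrack S Y" unfolding S_def by (rule subA[OF SY])
    show "rack_act_set Y R = R" unfolding R_def by (rule closedA[OF RY])
    show "rack_act_set Y S = S" unfolding S_def by (rule closedA[OF SY])
  qed
  have sY: "subrack Y ?C" unfolding subrack_def using YC closedY by blast
  have rG: "r0 \<in> Gp n" and sG: "s0 \<in> Gp n" using r0 s0 .
  note SLr = Gp_SL[OF rG] and SLs = Gp_SL[OF sG]
  have g1: "rack_op r0 s0 \<in> Gp n" using Gp_closed[OF rG sG] by simp
  have g2: "rack_op s0 (rack_op r0 s0) \<in> Gp n" using Gp_closed[OF sG g1] by simp
  have g3: "rack_op r0 (rack_op s0 (rack_op r0 s0)) \<in> Gp n" using Gp_closed[OF rG g2] by simp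
  have "rack_op (?F r0) (rack_op (?F s0) (rack_op (?F r0) (?F s0)))
        = ?F (rack_op r0 (rack_op s0 (rack_op r0 s0)))"
    by (simp add: Phi_rack[OF Pc Qc PQ QP] SLr SLs Gp_SL[OF g1] Gp_SL[OF g2])
  moreover have "?F (rack_op r0 (rack_op s0 (rack_op r0 s0))) \<noteq> ?F s0"
    using Phi_inj[OF Pc Qc PQ QP Gc[OF g3] Gc[OF sG]] D by blast
  ultimately have Dw: "rack_op (?F r0) (rack_op (?F s0) (rack_op (?F r0) (?F s0))) \<noteq> ?F s0" by simp
  have "?F r0 \<in> R" "?F s0 \<in> S" using r0Y s0Y unfolding R_def S_def by auto
  thus ?thesis unfolding rack_type_D_def using sY dec Dw by blast
qed


lemma LT_SL:
  assumes Ac: "A \<in> carrier_mat n n" and d: "\<And>i. i < n \<Longrightarrow> A $$ (i,i) = 1"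
    and l: "\<And>i j. i < j \<Longrightarrow> j < n \<Longrightarrow> A $$ (i,j) = 0"
  shows "A \<in> SL_mat n"
proof -
  have "det A = prod_list (diag_mat A)" by (rule det_lower_triangular[OF l Ac])
  also have "\<dots> = (\<Prod>i = 0 ..< n. A $$ (i,i))" using Ac by (simp add: prod_list_diag_prod)
  also have "\<dots> = 1" using d by (auto intro!: prod.neutral)
  finally show ?thesis using Ac by (simp add: SL_mat_def)
qed

lemma even_invol:
  assumes f1: "\<And>x. f (f x) = x" and f2: "\<And>x. f x \<noteq> x"
  shows "finite A \<Longrightarrow> f ` A \<subseteq> A \<Longrightarrow> even (card A)"
proof (induction "card A" arbitrary: A rule: less_induct)
  case less
  show ?case
  proof (cases "A = {}")
    case True thus ?thesis by simp
  next
    case False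
    then obtain x where x: "x \<in> A" by blast
    have fx: "f x \<in> A" using x less.prems by blast
    define B where "B = A - {x, f x}"
    have fin: "finite B" using less.prems by (simp add: B_def)
    have cB: "card A = card B + 2"
    proof -
      have "card A = card (A - {x, f x}) + card {x, f x}"
        using card_Diff_subset[of "{x, f x}" A] x fx less.prems(1) card_mono[of A "{x, f x}"]
        by (simp add: card_Diff_subset)
      thus ?thesis using f2[of x] by (simp add: B_def)
    qed
    have "f ` B \<subseteq> B"
    proof
      fix z assume "z \<in> f ` B"
      then obtain y where y: "y \<in> B" "z = f y" by blast
      have "z \<in> A" using y less.prems unfolding B_def by blast
      moreover have "z \<noteq> x" using y f1[of y] unfolding B_def by auto
      moreover have "z \<noteq> f x" using y f1[of y] f1[of x] unfolding B_def by (metis DiffD2 insertCI)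
      ultimately show "z \<in> B" unfolding B_def by blast
    qed
    hence "even (card B)" using less.hyps[of B] cB fin by simp
    thus ?thesis using cB by simp
  qed
qed

lemma two_ne_zero_odd:
  assumes "finite (UNIV :: 'a :: field set)" "odd (card (UNIV :: 'a set))"
  shows "(2::'a) \<noteq> 0"
proof
  assume two: "(2::'a) = 0"
  have "even (card (UNIV :: 'a set))"
    by (rule even_invol[of "\<lambda>x. x + 1"], auto simp: assms(1))
       (metis add.assoc one_add_one two add.right_neutral)
  thus False using assms(2) by simp
qed

lemma less3: "(i::nat) < 3 \<longleftrightarrow> i = 0 \<or> i = 1 \<or> i = 2" by auto
lemma less4: "(i::nat) < 4 \<longleftrightarrow> i = 0 \<or> i = 1 \<or> i = 2 \<or> i = 3" by auto
lemma sum3: "(\<Sum>k\<in>{0..<3::nat}. f k) = f 0 + f 1 + (f 2 :: 'a::comm_monoid_add)"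
  by (simp add: eval_nat_numeral atLeast0_lessThan_Suc add.commute add.left_commute)
lemma sum4: "(\<Sum>k\<in>{0..<4::nat}. f k) = f 0 + f 1 + f 2 + (f 3 :: 'a::comm_monoid_add)"
  by (simp add: eval_nat_numeral atLeast0_lessThan_Suc add.commute add.left_commute)

definition J3 :: "'a::field mat" where "J3 = mat_of_rows_list 3 [[1,1,0],[0,1,0],[0,0,1]]"
definition J3i :: "'a::field mat" where "J3i = mat_of_rows_list 3 [[1,-1,0],[0,1,0],[0,0,1]]"
definition a1 :: "'a::field mat" where "a1 = mat_of_rows_list 3 [[1,0,0],[0,1,-1],[0,0,1]]"
definition a1i :: "'a::field mat" where "a1i = mat_of_rows_list 3 [[1,0,0],[0,1,1],[0,0,1]]"
definition M1 :: "'a::field mat" where "M1 = mat_of_rows_list 3 [[1,1,1],[0,1,0],[0,0,1]]"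
definition a2 :: "'a::field mat" where "a2 = mat_of_rows_list 3 [[1,0,0],[0,1,0],[0,1,1]]"
definition a2i :: "'a::field mat" where "a2i = mat_of_rows_list 3 [[1,0,0],[0,1,0],[0,-1,1]]"
definition M2 :: "'a::field mat" where "M2 = mat_of_rows_list 3 [[1,0,1],[0,1,0],[0,0,1]]"
definition a3 :: "'a::field mat" where "a3 = mat_of_rows_list 3 [[1,0,0],[1,1,0],[0,0,1]]"
definition a3i :: "'a::field mat" where "a3i = mat_of_rows_list 3 [[1,0,0],[-1,1,0],[0,0,1]]"
definition S3 :: "'a::field mat" where "S3 = mat_of_rows_list 3 [[1,0,1],[0,1,1],[0,0,1]]"
definition S3i :: "'a::field mat" where "S3i = mat_of_rows_list 3 [[1,0,-1],[0,1,-1],[0,0,1]]"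
definition T31 :: "'a::field mat" where "T31 = mat_of_rows_list 3 [[1,0,2],[0,1,1],[0,0,1]]"
definition T33 :: "'a::field mat" where "T33 = mat_of_rows_list 3 [[1,0,3],[0,1,1],[0,0,1]]"

lemmas defs3 = J3_def J3i_def a1_def a1i_def M1_def a2_def a2i_def M2_def a3_def a3i_def S3_def S3i_def T31_def T33_def


lemma c3_car: "J3 \<in> carrier_mat 3 3" "J3i \<in> carrier_mat 3 3" "a1 \<in> carrier_mat 3 3" "a1i \<in> carrier_mat 3 3"
  "a2 \<in> carrier_mat 3 3" "a2i \<in> carrier_mat 3 3" "a3 \<in> carrier_mat 3 3" "a3i \<in> carrier_mat 3 3"
  "M1 \<in> carrier_mat 3 3" "M2 \<in> carrier_mat 3 3" "S3 \<in> carrier_mat 3 3" "S3i \<in> carrier_mat 3 3"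
  "T31 \<in> carrier_mat 3 3" "T33 \<in> carrier_mat 3 3"
  by (auto simp: defs3 mat_of_rows_list_def)

lemma c3_prod:
  "J3 * J3i = (1\<^sub>m 3 :: 'a::field mat)" "J3i * J3 = (1\<^sub>m 3 :: 'a::field mat)"
  "a1 * a1i = (1\<^sub>m 3 :: 'a::field mat)" "a1i * a1 = (1\<^sub>m 3 :: 'a::field mat)"
  "a2 * a2i = (1\<^sub>m 3 :: 'a::field mat)" "a2i * a2 = (1\<^sub>m 3 :: 'a::field mat)"
  "a3 * a3i = (1\<^sub>m 3 :: 'a::field mat)" "a3i * a3 = (1\<^sub>m 3 :: 'a::field mat)"
  "S3 * S3i = (1\<^sub>m 3 :: 'a::field mat)" "S3i * S3 = (1\<^sub>m 3 :: 'a::field mat)"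
  by (rule eq_matI; auto simp: defs3 mat_of_rows_list_def scalar_prod_def sum3 less3 less_Suc_eq)+

lemma c3_conj:
  "a1 * J3 * a1i = (M1 :: 'a::field mat)"
  "a2 * M1 * a2i = (M2 :: 'a::field mat)"
  "a3 * M2 * a3i = (S3 :: 'a::field mat)"
  "J3 * S3 * J3i = (T31 :: 'a::field mat)"
  "S3 * T31 * S3i = (T31 :: 'a::field mat)"
  "J3 * T31 * J3i = (T33 :: 'a::field mat)"
  by (rule eq_matI; auto simp: defs3 mat_of_rows_list_def scalar_prod_def sum3 less3 less_Suc_eq)+


lemma chain_step:
  assumes Pc: "P \<in> carrier_mat n n" and Qc: "Q \<in> carrier_mat n n"
    and PQ: "P * Q = 1\<^sub>m n" and QP: "Q * P = 1\<^sub>m n"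
    and uSL: "u \<in> SL_mat n" and xC: "P * x * Q \<in> conj_class_SL n u"
    and x: "x \<in> SL_mat n" and e: "e \<in> SL_mat n"
  shows "P * rack_op e x * Q \<in> conj_class_SL n u"
  unfolding Phi_rack[OF Pc Qc PQ QP e x, symmetric]
  by (rule C_closed[OF SL_carrier[OF uSL] Phi_SL[OF Pc Qc PQ QP e] xC])

lemma case3:
  fixes u :: "'a::field mat"
  assumes two: "(2::'a) \<noteq> 0" and uSL: "u \<in> SL_mat 3" and jnf: "jordan_nf u [(2,1),(1,1)]"
  shows "rack_type_D (conj_class_SL 3 u)"
proof -
  have JJ: "jordan_matrix [(2,1),(1,1)] = (J3::'a mat)"
    by (rule eq_matI) (auto simp: J3_def mat_of_rows_list_def jordan_matrix_def less3 Let_def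
        index_mat_four_block less_Suc_eq numeral_eq_Suc)
  have "similar_mat u J3" using jnf unfolding jordan_nf_def JJ by blast
  then obtain m P Q where PQm: "{u, J3, P, Q} \<subseteq> carrier_mat m m" "P * Q = 1\<^sub>m m" "Q * P = 1\<^sub>m m" "u = P * J3 * Q"
    by (blast dest: similar_matD)
  have "m = 3" using PQm(1) SL_carrier[OF uSL] by auto
  hence Pc: "P \<in> carrier_mat 3 3" and Qc: "Q \<in> carrier_mat 3 3" and PQ: "P * Q = 1\<^sub>m 3" and QP: "Q * P = 1\<^sub>m 3"
    and u: "u = P * J3 * Q" using PQm by auto
  note cc = c3_car and pp = c3_prod and cj = c3_conj
  have UTs: "(J3::'a mat) \<in> UT 3" "(J3i::'a mat) \<in> UT 3" "(S3::'a mat) \<in> UT 3" "(S3i::'a mat) \<in> UT 3"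
    "(M1::'a mat) \<in> UT 3" "(M2::'a mat) \<in> UT 3" "(a1::'a mat) \<in> UT 3" "(T31::'a mat) \<in> UT 3"
    by (auto simp: UT_def defs3 mat_of_rows_list_def less3 less_Suc_eq numeral_2_eq_2)
  have SLs: "(a2::'a mat) \<in> SL_mat 3" "(a3::'a mat) \<in> SL_mat 3"
    by (rule LT_SL, auto simp: defs3 mat_of_rows_list_def less3 less_Suc_eq numeral_2_eq_2)+
  have inv: "mat_inv J3 = (J3i::'a mat)" "mat_inv S3 = (S3i::'a mat)" "mat_inv a1 = (a1i::'a mat)"
    "mat_inv a2 = (a2i::'a mat)" "mat_inv a3 = (a3i::'a mat)"
    by (rule mat_inv_eq[of _ 3]; (rule cc pp))+
  have GJ: "(J3 :: 'a mat) \<in> Gp 3" and GS: "(S3 :: 'a mat) \<in> Gp 3" using UTs inv by (auto simp: Gp_def)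
  have r1: "rack_op a1 J3 = (M1 :: 'a mat)" "rack_op a2 M1 = (M2 :: 'a mat)" "rack_op a3 M2 = (S3 :: 'a mat)"
     "rack_op J3 S3 = (T31 :: 'a mat)" "rack_op S3 T31 = (T31 :: 'a mat)" "rack_op J3 T31 = (T33 :: 'a mat)"
    unfolding rack_op_def inv by (rule cj)+
  note chain = chain_step[OF Pc Qc PQ QP uSL]
  have "P * (J3 :: 'a mat) * Q \<in> conj_class_SL 3 u" using u u_in_C[OF SL_carrier[OF uSL]] by simp
  hence "P * M1 * Q \<in> conj_class_SL 3 u" using chain[of J3 a1] UTs UT_SL r1 by metis
  hence "P * M2 * Q \<in> conj_class_SL 3 u" using chain[of M1 a2] UTs UT_SL SLs r1 by metis
  hence sC: "P * S3 * Q \<in> conj_class_SL 3 u" using chain[of M2 a3] UTs UT_SL SLs r1 by metis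
  have "sd 3 (J3 :: 'a mat) 0 \<noteq> sd 3 (S3 :: 'a mat) 0" by (simp add: sd_def defs3 mat_of_rows_list_def)
  hence sdne: "sd 3 (J3 :: 'a mat) \<noteq> sd 3 (S3 :: 'a mat)" by metis
  have "T33 $$ (0,2) \<noteq> (S3 :: 'a mat) $$ (0,2)"
  proof
    assume "T33 $$ (0,2) = (S3 :: 'a mat) $$ (0,2)"
    hence "(3::'a) = 1" by (simp add: defs3 mat_of_rows_list_def)
    hence "(3::'a) - 1 = 0" by simp
    moreover have "(3::'a) - 1 = 2" by simp
    ultimately show False using two by simp
  qed
  hence D: "rack_op (J3 :: 'a mat) (rack_op S3 (rack_op J3 S3)) \<noteq> (S3 :: 'a mat)" unfolding r1 by metis
  show ?thesis by (rule criterion[OF Pc Qc PQ QP uSL u GJ GS sC sdne D])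
qed



definition J4 :: "'a::field mat" where "J4 = mat_of_rows_list 4 [[1,1,0,0],[0,1,0,0],[0,0,1,1],[0,0,0,1]]"
definition J4i :: "'a::field mat" where "J4i = mat_of_rows_list 4 [[1,-1,0,0],[0,1,0,0],[0,0,1,-1],[0,0,0,1]]"
definition b1 :: "'a::field mat" where "b1 = mat_of_rows_list 4 [[1,0,0,0],[0,1,1,0],[0,0,1,0],[0,0,0,1]]"
definition b1i :: "'a::field mat" where "b1i = mat_of_rows_list 4 [[1,0,0,0],[0,1,-1,0],[0,0,1,0],[0,0,0,1]]"
definition N1 :: "'a::field mat" where "N1 = mat_of_rows_list 4 [[1,1,-1,0],[0,1,0,1],[0,0,1,1],[0,0,0,1]]"
definition b2 :: "'a::field mat" where "b2 = mat_of_rows_list 4 [[1,0,0,0],[0,1,0,0],[0,-1,1,0],[0,0,0,1]]"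
definition b2i :: "'a::field mat" where "b2i = mat_of_rows_list 4 [[1,0,0,0],[0,1,0,0],[0,1,1,0],[0,0,0,1]]"
definition S4 :: "'a::field mat" where "S4 = mat_of_rows_list 4 [[1,0,-1,0],[0,1,0,1],[0,0,1,0],[0,0,0,1]]"
definition S4i :: "'a::field mat" where "S4i = mat_of_rows_list 4 [[1,0,1,0],[0,1,0,-1],[0,0,1,0],[0,0,0,1]]"
definition T41 :: "'a::field mat" where "T41 = mat_of_rows_list 4 [[1,0,-1,2],[0,1,0,1],[0,0,1,0],[0,0,0,1]]"
definition T43 :: "'a::field mat" where "T43 = mat_of_rows_list 4 [[1,0,-1,4],[0,1,0,1],[0,0,1,0],[0,0,0,1]]"
definition P1 :: "'a::field mat" where "P1 = mat_of_rows_list 4 [[1,1,0,0],[0,1,1,1],[0,0,1,1],[0,0,0,1]]"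
definition P2 :: "'a::field mat" where "P2 = mat_of_rows_list 4 [[1,1,-1,0],[0,1,0,1],[0,-1,1,0],[0,0,0,1]]"
definition P3 :: "'a::field mat" where "P3 = mat_of_rows_list 4 [[1,1,-1,1],[0,1,0,1],[0,0,1,1],[0,0,0,1]]"
definition P4 :: "'a::field mat" where "P4 = mat_of_rows_list 4 [[1,0,-2,2],[0,1,0,2],[0,0,1,0],[0,0,0,1]]"
definition P5 :: "'a::field mat" where "P5 = mat_of_rows_list 4 [[1,1,-1,3],[0,1,0,1],[0,0,1,1],[0,0,0,1]]"
lemmas defs4 = J4_def J4i_def b1_def b1i_def N1_def b2_def b2i_def S4_def S4i_def T41_def T43_def P1_def P2_def P3_def P4_def P5_def


lemma c4_car: "J4 \<in> carrier_mat 4 4" "J4i \<in> carrier_mat 4 4" "b1 \<in> carrier_mat 4 4" "b1i \<in> carrier_mat 4 4"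
  "b2 \<in> carrier_mat 4 4" "b2i \<in> carrier_mat 4 4" "N1 \<in> carrier_mat 4 4"
  "S4 \<in> carrier_mat 4 4" "S4i \<in> carrier_mat 4 4" "T41 \<in> carrier_mat 4 4" "T43 \<in> carrier_mat 4 4"
  "P1 \<in> carrier_mat 4 4" "P2 \<in> carrier_mat 4 4" "P3 \<in> carrier_mat 4 4" "P4 \<in> carrier_mat 4 4" "P5 \<in> carrier_mat 4 4"
  by (auto simp: defs4 mat_of_rows_list_def)

lemma c4_prod:
  "J4 * J4i = (1\<^sub>m 4 :: 'a::field mat)" "J4i * J4 = (1\<^sub>m 4 :: 'a::field mat)"
  "b1 * b1i = (1\<^sub>m 4 :: 'a::field mat)" "b1i * b1 = (1\<^sub>m 4 :: 'a::field mat)"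
  "b2 * b2i = (1\<^sub>m 4 :: 'a::field mat)" "b2i * b2 = (1\<^sub>m 4 :: 'a::field mat)"
  "S4 * S4i = (1\<^sub>m 4 :: 'a::field mat)" "S4i * S4 = (1\<^sub>m 4 :: 'a::field mat)"
  by (rule eq_matI; auto simp: defs4 mat_of_rows_list_def scalar_prod_def sum4 less4 less_Suc_eq)+

lemma c4_pre:
  "b1 * J4 = (P1 :: 'a::field mat)"  "P1 * b1i = (N1 :: 'a::field mat)"
  "b2 * N1 = (P2 :: 'a::field mat)"  "P2 * b2i = (S4 :: 'a::field mat)"
  "J4 * S4 = (P3 :: 'a::field mat)"  "P3 * J4i = (T41 :: 'a::field mat)"
  "S4 * T41 = (P4 :: 'a::field mat)"  "P4 * S4i = (T41 :: 'a::field mat)"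
  "J4 * T41 = (P5 :: 'a::field mat)"  "P5 * J4i = (T43 :: 'a::field mat)"
  by (rule eq_matI; auto simp: defs4 mat_of_rows_list_def scalar_prod_def sum4 less4 less_Suc_eq)+

lemma c4_conj:
  "b1 * J4 * b1i = (N1 :: 'a::field mat)"
  "b2 * N1 * b2i = (S4 :: 'a::field mat)"
  "J4 * S4 * J4i = (T41 :: 'a::field mat)"
  "S4 * T41 * S4i = (T41 :: 'a::field mat)"
  "J4 * T41 * J4i = (T43 :: 'a::field mat)"
  by (simp_all add: c4_pre)


lemma UT_I4:
  assumes "A \<in> carrier_mat 4 4" "A $$ (0,0) = 1" "A $$ (1,1) = 1" "A $$ (2,2) = 1" "A $$ (3,3) = 1"
    "A $$ (1,0) = 0" "A $$ (2,0) = 0" "A $$ (2,1) = 0" "A $$ (3,0) = 0" "A $$ (3,1) = 0" "A $$ (3,2) = 0"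
  shows "A \<in> UT 4"
proof -
  have "\<forall>i<4. A $$ (i,i) = 1 \<and> (\<forall>j<i. A $$ (i,j) = 0)"
  proof (intro allI impI conjI)
    fix i :: nat assume "i < 4" thus "A $$ (i,i) = 1" using assms unfolding less4 by (elim disjE) simp_all
  next
    fix i j :: nat assume "i < 4" "j < i"
    hence "i = 1 \<and> j = 0 \<or> i = 2 \<and> j = 0 \<or> i = 2 \<and> j = 1 \<or> i = 3 \<and> j = 0 \<or> i = 3 \<and> j = 1 \<or> i = 3 \<and> j = 2" by arith
    thus "A $$ (i,j) = 0" using assms by (elim disjE conjE) simp_all
  qed
  thus ?thesis using assms(1) by (simp add: UT_def)
qed

lemma LT_I4:
  assumes "A \<in> carrier_mat 4 4" "A $$ (0,0) = 1" "A $$ (1,1) = 1" "A $$ (2,2) = 1" "A $$ (3,3) = 1"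
    "A $$ (0,1) = 0" "A $$ (0,2) = 0" "A $$ (1,2) = 0" "A $$ (0,3) = 0" "A $$ (1,3) = 0" "A $$ (2,3) = 0"
  shows "A \<in> SL_mat 4"
proof (rule LT_SL[OF assms(1)])
  fix i :: nat assume "i < 4" thus "A $$ (i,i) = 1" using assms unfolding less4 by (elim disjE) simp_all
next
  fix i j :: nat assume "i < j" "j < 4"
  hence "j = 1 \<and> i = 0 \<or> j = 2 \<and> i = 0 \<or> j = 2 \<and> i = 1 \<or> j = 3 \<and> i = 0 \<or> j = 3 \<and> i = 1 \<or> j = 3 \<and> i = 2" by arith
  thus "A $$ (i,j) = 0" using assms by (elim disjE conjE) simp_all
qed

lemma case4:
  fixes u :: "'a::field mat"
  assumes two: "(2::'a) \<noteq> 0" and uSL: "u \<in> SL_mat 4" and jnf: "jordan_nf u [(2,1),(2,1)]"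
  shows "rack_type_D (conj_class_SL 4 u)"
proof -
  have JJ: "jordan_matrix [(2,1),(2,1)] = (J4::'a mat)"
    by (rule eq_matI) (auto simp: J4_def mat_of_rows_list_def jordan_matrix_def less4 Let_def
        index_mat_four_block less_Suc_eq numeral_eq_Suc)
  have "similar_mat u J4" using jnf unfolding jordan_nf_def JJ by blast
  then obtain m P Q where PQm: "{u, J4, P, Q} \<subseteq> carrier_mat m m" "P * Q = 1\<^sub>m m" "Q * P = 1\<^sub>m m" "u = P * J4 * Q"
    by (blast dest: similar_matD)
  have "m = 4" using PQm(1) SL_carrier[OF uSL] by auto
  hence Pc: "P \<in> carrier_mat 4 4" and Qc: "Q \<in> carrier_mat 4 4" and PQ: "P * Q = 1\<^sub>m 4" and QP: "Q * P = 1\<^sub>m 4"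
    and u: "u = P * J4 * Q" using PQm by auto
  note cc = c4_car and pp = c4_prod and cj = c4_conj
  have UTs: "(J4::'a mat) \<in> UT 4" "(J4i::'a mat) \<in> UT 4" "(S4::'a mat) \<in> UT 4" "(S4i::'a mat) \<in> UT 4"
    "(N1::'a mat) \<in> UT 4" "(b1::'a mat) \<in> UT 4" "(T41::'a mat) \<in> UT 4"
    by (intro UT_I4 c4_car; simp add: defs4 mat_of_rows_list_def)+
  have SLs: "(b2::'a mat) \<in> SL_mat 4"
    by (intro LT_I4 c4_car; simp add: defs4 mat_of_rows_list_def)
  have inv: "mat_inv J4 = (J4i::'a mat)" "mat_inv S4 = (S4i::'a mat)" "mat_inv b1 = (b1i::'a mat)"
    "mat_inv b2 = (b2i::'a mat)"
    by (rule mat_inv_eq[of _ 4]; (rule cc pp))+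
  have GJ: "(J4 :: 'a mat) \<in> Gp 4" and GS: "(S4 :: 'a mat) \<in> Gp 4" using UTs inv by (auto simp: Gp_def)
  have r1: "rack_op b1 J4 = (N1 :: 'a mat)" "rack_op b2 N1 = (S4 :: 'a mat)"
     "rack_op J4 S4 = (T41 :: 'a mat)" "rack_op S4 T41 = (T41 :: 'a mat)" "rack_op J4 T41 = (T43 :: 'a mat)"
    unfolding rack_op_def inv by (rule cj)+
  note chain = chain_step[OF Pc Qc PQ QP uSL]
  have "P * (J4 :: 'a mat) * Q \<in> conj_class_SL 4 u" using u u_in_C[OF SL_carrier[OF uSL]] by simp
  hence "P * N1 * Q \<in> conj_class_SL 4 u" using chain[of J4 b1] UTs UT_SL r1 by metis
  hence sC: "P * S4 * Q \<in> conj_class_SL 4 u" using chain[of N1 b2] UTs UT_SL SLs r1 by metis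
  have "sd 4 (J4 :: 'a mat) 0 \<noteq> sd 4 (S4 :: 'a mat) 0" by (simp add: sd_def defs4 mat_of_rows_list_def)
  hence sdne: "sd 4 (J4 :: 'a mat) \<noteq> sd 4 (S4 :: 'a mat)" by metis
  have "T43 $$ (0,3) \<noteq> (S4 :: 'a mat) $$ (0,3)"
  proof
    assume "T43 $$ (0,3) = (S4 :: 'a mat) $$ (0,3)"
    hence "(4::'a) = 0" by (simp add: defs4 mat_of_rows_list_def)
    hence "(2::'a) * 2 = 0" by simp
    hence "(2::'a) = 0 \<or> (2::'a) = 0" by (simp only: mult_eq_0_iff)
    thus False using two by blast
  qed
  hence D: "rack_op (J4 :: 'a mat) (rack_op S4 (rack_op J4 S4)) \<noteq> (S4 :: 'a mat)" unfolding r1 by metis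
  show ?thesis by (rule criterion[OF Pc Qc PQ QP uSL u GJ GS sC sdne D])
qed


theorem mainTheorem10:
  fixes u :: "'a :: field mat" and n :: nat
  assumes "finite (UNIV :: 'a set)"
    and "odd (card (UNIV :: 'a set))"
    and "u \<in> SL_mat n"
    and "(n = 4 \<and> jordan_nf u [(2, 1), (2, 1)]) \<or> (n = 3 \<and> jordan_nf u [(2, 1), (1, 1)])"
  shows "rack_type_D (conj_class_SL n u)"
proof -
  have two: "(2::'a) \<noteq> 0" by (rule two_ne_zero_odd[OF assms(1,2)])
  from assms(4) show ?thesis
  proof
    assume h: "n = 4 \<and> jordan_nf u [(2, 1), (2, 1)]"
    thus ?thesis using case4[OF two] assms(3) by blast
  next
    assume h: "n = 3 \<and> jordan_nf u [(2, 1), (1, 1)]"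
    thus ?thesis using case3[OF two] assms(3) by blast
  qed
qed

end
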